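(* Let $n\ge1$ and let $\mathbb{F}$ be a field of characteristic $0$ or of odd prime characteristic $p$. In the group algebra $\mathbb{F}(SD_{8n})$: (i) the set $$\{a^{2k}-a^{-2k},\ (a^{2k}-a^{-2k})b\mid 1\le k\le n-1\}\cup\{a^{2k+1}-a^{2n-(2k+1)},\ (a^{2k+1}-a^{2n-(2k+1)})b\mid -\lfloor\tfrac n2\rfloor\le k\le\lfloor\tfrac n2\rfloor-1\}$$ is an $\mathbb{F}$-basis of $\bar{C}(b)$; (ii) the set $$\{a^{2k}-a^{-2k},\ a(a^{2k}-a^{-2k})b\mid 1\le k\le n-1\}\cup\{a^{2k+1}-a^{2n-(2k+1)},\ a(a^{2k+1}-a^{2n-(2k+1)})b\mid -\lfloor\tfrac n2\rfloor\le k\le\lfloor\tfrac n2\rfloor-1\}$$ is an $\mathbb{F}$-basis of $\bar{C}(ab)$.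
   Context: $SD_{8n}=\langle a,b\mid a^{4n}=b^2=1,\ bab=a^{2n-1}\rangle$ is the semi-dihedral group of order $8n$, with elements $a^ib^j$, $0\le i\le 4n-1$, $0\le j\le1$ (exponents of $a$ are taken modulo $4n$); $\mathbb{F}(SD_{8n})$ is its group algebra. For $\beta$ in the group algebra, the anti-centralizer is $\bar{C}(\beta)=\{\alpha\mid\alpha\beta=-\beta\alpha\}$, an $\mathbb{F}$-subspace. $\lfloor x\rfloor$ is the floor function. *)

theory Defs
  imports "HOL-Computational_Algebra.Primes" HOL.Modules "HOL-Library.Function_Algebras"
begin

text \<open>The group element a^i b^j (0 <= i < 4n, 0 <= j < 2)
  is encoded as the pair (i, j).\<close>

definition sd_grp :: "nat \<Rightarrow> (nat \<times> nat) set" where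
  "sd_grp n = {0..<4*n} \<times> {0..<2}"

text \<open>Group law: (a^i b^j)(a^k b^l) = a^(i + k (2n-1)^j) b^(j+l), since b a^k b = a^(k(2n-1)).\<close>
definition sd_mul :: "nat \<Rightarrow> nat \<times> nat \<Rightarrow> nat \<times> nat \<Rightarrow> nat \<times> nat" where
  "sd_mul n x y = ((fst x + fst y * (2*n - 1) ^ snd x) mod (4*n), (snd x + snd y) mod 2)"

definition sd_alg :: "nat \<Rightarrow> (nat \<times> nat \<Rightarrow> 'a::field) set" where
  "sd_alg n = {f. \<forall>x. x \<notin> sd_grp n \<longrightarrow> f x = 0}"

definition sd_conv :: "nat \<Rightarrow> (nat \<times> nat \<Rightarrow> 'a::field) \<Rightarrow> (nat \<times> nat \<Rightarrow> 'a) \<Rightarrow> (nat \<times> nat \<Rightarrow> 'a)" where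
  "sd_conv n f g = (\<lambda>x. \<Sum>y\<in>sd_grp n. \<Sum>z\<in>sd_grp n. if sd_mul n y z = x then f y * g z else 0)"

definition sd_elem :: "nat \<Rightarrow> int \<Rightarrow> nat \<Rightarrow> (nat \<times> nat \<Rightarrow> 'a::field)" where
  "sd_elem n m j = (\<lambda>x. if x = (nat (m mod int (4*n)), j) then 1 else 0)"

abbreviation sd_apow :: "nat \<Rightarrow> int \<Rightarrow> (nat \<times> nat \<Rightarrow> 'a::field)" where
  "sd_apow n m \<equiv> sd_elem n m 0"

abbreviation sd_a :: "nat \<Rightarrow> (nat \<times> nat \<Rightarrow> 'a::field)" where
  "sd_a n \<equiv> sd_elem n 1 0"

abbreviation sd_b :: "nat \<Rightarrow> (nat \<times> nat \<Rightarrow> 'a::field)" where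
  "sd_b n \<equiv> sd_elem n 0 1"

definition anti_cent :: "nat \<Rightarrow> (nat \<times> nat \<Rightarrow> 'a::field) \<Rightarrow> (nat \<times> nat \<Rightarrow> 'a) set" where
  "anti_cent n \<beta> = {\<alpha> \<in> sd_alg n. sd_conv n \<alpha> \<beta> = - sd_conv n \<beta> \<alpha>}"

definition fscale :: "'a::field \<Rightarrow> ('b \<Rightarrow> 'a) \<Rightarrow> ('b \<Rightarrow> 'a)" where
  "fscale c f = (\<lambda>x. c * f x)"

definition is_basis_of :: "('b \<Rightarrow> 'a::field) set \<Rightarrow> ('b \<Rightarrow> 'a) set \<Rightarrow> bool" where
  "is_basis_of B V \<longleftrightarrow> \<not> module.dependent fscale B \<and> module.span fscale B = V"

end

theory Submission
  imports Defs
begin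


definition dl :: "'b \<Rightarrow> 'b \<Rightarrow> 'a::field" where
  "dl p = (\<lambda>x. if x = p then 1 else 0)"

definition sigL :: "nat \<Rightarrow> nat \<Rightarrow> nat" where
  "sigL n i = (if even i then (if i = 0 then 0 else 4*n - i) else (if i \<le> 2*n then 2*n - i else 6*n - i))"

definition modL :: "nat \<Rightarrow> nat \<Rightarrow> nat" where
  "modL N a = (if a < N then a else a - N)"

lemma modL_eq: "a < 2*N \<Longrightarrow> a mod N = modL N a"
  unfolding modL_def by (simp add: le_mod_geq)

lemma nat_mod_from_int:
  assumes "int a = int r + int N * q" "r < N"
  shows "a mod N = r"
proof -
  have "int (a mod N) = int a mod int N" by (simp add: zmod_int)
  also have "\<dots> = int r mod int N" using assms(1) by simp
  also have "\<dots> = int r" using assms(2) by simp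
  finally show ?thesis by simp
qed

lemma sig_eq:
  assumes "n \<ge> 1" "i < 4*n"
  shows "(i * (2*n - 1)) mod (4*n) = sigL n i"
proof -
  have c: "int (2*n-1) = 2 * int n - 1" using assms(1) by (simp add: of_nat_diff)
  show ?thesis
  proof (cases "even i")
    case True
    then obtain t where t: "i = 2*t" by blast
    show ?thesis
    proof (cases "t = 0")
      case True thus ?thesis using t by (simp add: sigL_def)
    next
      case False
      have e2: "int (4*n - i) = 4*int n - int i" using assms by (simp add: of_nat_diff)
      have "int (i * (2*n-1)) = int (4*n - i) + int (4*n) * (int t - 1)"
        by (subst of_nat_mult, subst c, subst e2) (simp add: t algebra_simps)
      hence "(i * (2*n - 1)) mod (4*n) = 4*n - i" by (rule nat_mod_from_int) (use t False assms in simp)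
      thus ?thesis using True t False by (simp add: sigL_def)
    qed
  next
    case False
    then obtain t where t: "i = 2*t+1" using oddE by blast
    show ?thesis
    proof (cases "i \<le> 2*n")
      case True
      have e2: "int (2*n - i) = 2*int n - int i" using True by (simp add: of_nat_diff)
      have "int (i * (2*n-1)) = int (2*n - i) + int (4*n) * int t"
        by (subst of_nat_mult, subst c, subst e2) (simp add: t algebra_simps)
      hence "(i * (2*n - 1)) mod (4*n) = 2*n - i" by (rule nat_mod_from_int) (use t assms in simp)
      thus ?thesis using False True by (simp add: sigL_def)
    next
      case False2: False
      have e2: "int (6*n - i) = 6*int n - int i" using assms by (simp add: of_nat_diff)
      have "int (i * (2*n-1)) = int (6*n - i) + int (4*n) * (int t - 1)"
        by (subst of_nat_mult, subst c, subst e2) (simp add: t algebra_simps)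
      hence "(i * (2*n - 1)) mod (4*n) = 6*n - i" by (rule nat_mod_from_int) (use t assms False2 in simp)
      thus ?thesis using False False2 by (simp add: sigL_def)
    qed
  qed
qed

lemma grp_iff: "(i, j) \<in> sd_grp n \<longleftrightarrow> i < 4*n \<and> j < 2"
  by (simp add: sd_grp_def)

lemma mul_in: "n \<ge> 1 \<Longrightarrow> sd_mul n x y \<in> sd_grp n"
  by (simp add: sd_mul_def sd_grp_def)

lemma fin_grp: "finite (sd_grp n)" by (simp add: sd_grp_def)

lemma conv_right:
  assumes "q \<in> sd_grp n"
  shows "sd_conv n f (dl q) x = (\<Sum>y\<in>sd_grp n. if sd_mul n y q = x then f y else 0)"
proof -
  have "(\<Sum>z\<in>sd_grp n. if sd_mul n y z = x then f y * dl q z else 0)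
      = (if sd_mul n y q = x then f y else 0)" for y
  proof -
    have "(\<Sum>z\<in>sd_grp n. if sd_mul n y z = x then f y * dl q z else 0)
       = (\<Sum>z\<in>sd_grp n. if z = q then (if sd_mul n y q = x then f y else 0) else 0)"
      by (intro sum.cong) (auto simp: dl_def)
    also have "\<dots> = (if sd_mul n y q = x then f y else 0)" using assms fin_grp by simp
    finally show ?thesis .
  qed
  thus ?thesis unfolding sd_conv_def by simp
qed

lemma conv_left:
  assumes "p \<in> sd_grp n"
  shows "sd_conv n (dl p) g x = (\<Sum>z\<in>sd_grp n. if sd_mul n p z = x then g z else 0)"
proof -
  have "(\<Sum>y\<in>sd_grp n. \<Sum>z\<in>sd_grp n. if sd_mul n y z = x then dl p y * g z else 0)
      = (\<Sum>y\<in>sd_grp n. if y = p then (\<Sum>z\<in>sd_grp n. if sd_mul n p z = x then g z else 0) else 0)"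
  proof (intro sum.cong refl)
    fix y show "(\<Sum>z\<in>sd_grp n. if sd_mul n y z = x then dl p y * g z else 0) =
        (if y = p then \<Sum>z\<in>sd_grp n. if sd_mul n p z = x then g z else 0 else 0)"
      by (cases "y = p") (simp_all add: dl_def cong: if_cong)
  qed
  also have "\<dots> = (\<Sum>z\<in>sd_grp n. if sd_mul n p z = x then g z else 0)" using assms fin_grp by simp
  finally show ?thesis unfolding sd_conv_def .
qed

lemma sum_uniq:
  assumes "finite A" "r \<in> A" "\<And>y. y \<in> A \<Longrightarrow> P y \<longleftrightarrow> y = r"
  shows "(\<Sum>y\<in>A. if P y then f y else 0) = f r"
proof -
  have "(\<Sum>y\<in>A. if P y then f y else 0) = (\<Sum>y\<in>A. if y = r then f y else 0)"
    using assms(3) by (intro sum.cong) auto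
  thus ?thesis using assms(1,2) by simp
qed

lemma conv_out:
  assumes "n \<ge> 1" "x \<notin> sd_grp n"
  shows "sd_conv n f g x = 0"
proof -
  have "sd_mul n y z \<noteq> x" for y z using mul_in[OF assms(1)] assms(2) by metis
  thus ?thesis unfolding sd_conv_def by simp
qed

lemma conv_dd:
  assumes "n \<ge> 1" "p \<in> sd_grp n" "q \<in> sd_grp n"
  shows "sd_conv n (dl p) (dl q) = (dl (sd_mul n p q) :: _ \<Rightarrow> 'a::field)"
proof (rule ext)
  fix x
  have "sd_conv n (dl p) (dl q) x = (\<Sum>y\<in>sd_grp n. if sd_mul n y q = x then (dl p y :: 'a) else 0)"
    by (rule conv_right[OF assms(3)])
  also have "\<dots> = (\<Sum>y\<in>sd_grp n. if y = p then (if sd_mul n p q = x then 1 else 0) else 0)"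
    by (intro sum.cong) (auto simp: dl_def)
  also have "\<dots> = dl (sd_mul n p q) x" using assms(2) fin_grp by (auto simp: dl_def)
  finally show "sd_conv n (dl p) (dl q) x = (dl (sd_mul n p q) x :: 'a)" .
qed

lemma conv_diff: "sd_conv n (f - g) h = sd_conv n f h - sd_conv n g h"
  unfolding sd_conv_def by (auto simp: fun_eq_iff sum_subtractf[symmetric] algebra_simps intro!: sum.cong)

lemma conv_diff2: "sd_conv n h (f - g) = sd_conv n h f - sd_conv n h g"
  unfolding sd_conv_def by (auto simp: fun_eq_iff sum_subtractf[symmetric] algebra_simps intro!: sum.cong)

lemma anti_char:
  fixes \<beta> :: "nat \<times> nat \<Rightarrow> 'a::field"
  assumes n: "n \<ge> 1"
    and cr: "\<And>\<alpha> x. x \<in> sd_grp n \<Longrightarrow> sd_conv n \<alpha> \<beta> x = \<alpha> (r x)"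
    and cl: "\<And>\<alpha> x. x \<in> sd_grp n \<Longrightarrow> sd_conv n \<beta> \<alpha> x = \<alpha> (l x)"
    and s: "\<And>y. y \<in> sd_grp n \<Longrightarrow> s y \<in> sd_grp n \<and> r (s y) = y \<and> l (s y) = \<tau> y"
    and rr: "\<And>x. x \<in> sd_grp n \<Longrightarrow> r x \<in> sd_grp n \<and> \<tau> (r x) = l x"
  shows "anti_cent n \<beta> = {f. (\<forall>x. x \<notin> sd_grp n \<longrightarrow> f x = 0) \<and> (\<forall>x\<in>sd_grp n. f (\<tau> x) = - f x)}"
proof (intro set_eqI iffI)
  fix f :: "nat \<times> nat \<Rightarrow> 'a" assume f: "f \<in> anti_cent n \<beta>"
  hence f0: "\<forall>x. x \<notin> sd_grp n \<longrightarrow> f x = 0" and fe: "sd_conv n f \<beta> = - sd_conv n \<beta> f"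
    by (auto simp: anti_cent_def sd_alg_def)
  have "f (\<tau> y) = - f y" if y: "y \<in> sd_grp n" for y
  proof -
    have "sd_conv n f \<beta> (s y) = - sd_conv n \<beta> f (s y)" using fe by simp
    thus ?thesis using cr cl s[OF y] by simp
  qed
  thus "f \<in> {f. (\<forall>x. x \<notin> sd_grp n \<longrightarrow> f x = 0) \<and> (\<forall>x\<in>sd_grp n. f (\<tau> x) = - f x)}" using f0 by simp
next
  fix f :: "nat \<times> nat \<Rightarrow> 'a" assume "f \<in> {f. (\<forall>x. x \<notin> sd_grp n \<longrightarrow> f x = 0) \<and> (\<forall>x\<in>sd_grp n. f (\<tau> x) = - f x)}"
  hence f0: "\<forall>x. x \<notin> sd_grp n \<longrightarrow> f x = 0" and ft: "\<forall>x\<in>sd_grp n. f (\<tau> x) = - f x" by auto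
  have "sd_conv n f \<beta> x = - sd_conv n \<beta> f x" for x
  proof (cases "x \<in> sd_grp n")
    case True
    thus ?thesis using cr cl rr[OF True] ft by (metis minus_minus)
  next
    case False thus ?thesis by (simp add: conv_out[OF n False])
  qed
  thus "f \<in> anti_cent n \<beta>" using f0 by (auto simp: anti_cent_def sd_alg_def fun_eq_iff)
qed




lemma sig_ev: "i = 2*t \<Longrightarrow> 0 < t \<Longrightarrow> sigL n i = 4*n - i"
  by (simp add: sigL_def)
lemma sig_lo: "i = 2*t+1 \<Longrightarrow> i \<le> 2*n \<Longrightarrow> sigL n i = 2*n - i"
  by (simp add: sigL_def)
lemma sig_hi: "i = 2*t+1 \<Longrightarrow> 2*n < i \<Longrightarrow> sigL n i = 6*n - i"
  by (simp add: sigL_def)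

lemma sig_basic:
  assumes "i < 4*n"
  shows "sigL n i < 4*n \<and> (even (sigL n i) \<longleftrightarrow> even i) \<and> sigL n (sigL n i) = i"
proof (cases "even i")
  case True
  then obtain t where t: "i = 2*t" by blast
  show ?thesis
  proof (cases "t = 0")
    case True thus ?thesis using t assms by (simp add: sigL_def)
  next
    case False
    have e: "4*n - i = 2*(2*n - t)" using t by simp
    have "sigL n i = 4*n - i" using t False by (simp add: sigL_def)
    moreover have "sigL n (4*n - i) = 4*n - (4*n - i)" using e assms t False by (intro sig_ev[OF e]) simp
    ultimately show ?thesis using e assms t False by simp
  qed
next
  case False
  then obtain t where t: "i = 2*t + 1" using oddE by blast
  show ?thesis
  proof (cases "i \<le> 2*n")
    case True
    have e: "2*n - i = 2*(n - t - 1) + 1" using t True by simp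
    have "sigL n i = 2*n - i" using False True by (simp add: sigL_def)
    moreover have "sigL n (2*n - i) = 2*n - (2*n - i)" by (rule sig_lo[OF e]) simp
    ultimately show ?thesis using e True t assms by simp
  next
    case F2: False
    have e: "6*n - i = 2*(3*n - t - 1) + 1" using t F2 assms by simp
    have "sigL n i = 6*n - i" using False F2 by (simp add: sigL_def)
    moreover have "sigL n (6*n - i) = 6*n - (6*n - i)" by (rule sig_hi[OF e]) (use F2 assms in simp)
    ultimately show ?thesis using e F2 t assms by simp
  qed
qed

definition Q1 :: "nat \<Rightarrow> nat \<Rightarrow> bool" where
  "Q1 n i \<longleftrightarrow> (\<exists>k::int. 1 \<le> k \<and> k \<le> int n - 1 \<and> int i = 2*k) \<or>
     (\<exists>k::int. - (int n div 2) \<le> k \<and> k \<le> int n div 2 - 1 \<and> int i = (if k \<ge> 0 then 2*k+1 else 4*int n + 2*k + 1))"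

lemma Q1_ev: "int v = 4*int n - 2*k \<Longrightarrow> 1 \<le> k \<Longrightarrow> k \<le> int n - 1 \<Longrightarrow> \<not> Q1 n v"
  unfolding Q1_def by (auto split: if_splits; presburger)

lemma Q1_od: "int v = 2*int n - 2*k - 1 \<Longrightarrow> - (int n div 2) \<le> k \<Longrightarrow> k \<le> int n div 2 - 1 \<Longrightarrow> \<not> Q1 n v"
  unfolding Q1_def by (auto split: if_splits; presburger)




lemma mfacts: "2 * (int n div 2) \<le> int n" "int n \<le> 2 * (int n div 2) + 1"
  by presburger+

lemma Q1_I1: "1 \<le> k \<Longrightarrow> k \<le> int n - 1 \<Longrightarrow> int i = 2*k \<Longrightarrow> Q1 n i"
  unfolding Q1_def by blast
lemma Q1_I2: "0 \<le> k \<Longrightarrow> k \<le> int n div 2 - 1 \<Longrightarrow> int i = 2*k+1 \<Longrightarrow> Q1 n i"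
  unfolding Q1_def by (rule disjI2, rule exI[of _ k]) simp
lemma Q1_I3: "- (int n div 2) \<le> k \<Longrightarrow> k < 0 \<Longrightarrow> int i = 4*int n + 2*k+1 \<Longrightarrow> Q1 n i"
  unfolding Q1_def by (rule disjI2, rule exI[of _ k]) simp

lemma cov_ev: assumes "(i::nat) = 2*t" "0 < t" "i < 4*n" "4*n - i \<noteq> i" shows "Q1 n i \<or> Q1 n (4*n - i)"
proof (cases "t \<le> n - 1")
  case True thus ?thesis using assms by (intro disjI1 Q1_I1[of "int t"]) auto
next
  case False
  thus ?thesis using assms by (intro disjI2 Q1_I1[of "2 * int n - int t"]) auto
qed

lemma cov_lo: assumes "(i::nat) = 2*t+1" "i \<le> 2*n" "2*n - i \<noteq> i" shows "Q1 n i \<or> Q1 n (2*n - i)"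
proof (cases "int t \<le> int n div 2 - 1")
  case True thus ?thesis using assms by (intro disjI1 Q1_I2[of "int t"]) auto
next
  case False
  have "int n - int t - 1 \<le> int n div 2 - 1"
  proof (rule ccontr)
    assume "\<not> ?thesis"
    hence "int n = 2 * (int n div 2) + 1" "int t = int n div 2" using False mfacts[of n] by linarith+
    thus False using assms by simp
  qed
  thus ?thesis using assms False mfacts[of n] by (intro disjI2 Q1_I2[of "int n - int t - 1"]) auto
qed

lemma cov_hi: assumes "(i::nat) = 2*t+1" "2*n < i" "i < 4*n" "6*n - i \<noteq> i" shows "Q1 n i \<or> Q1 n (6*n - i)"
proof (cases "int t - 2 * int n \<ge> - (int n div 2)")
  case True thus ?thesis using assms by (intro disjI1 Q1_I3[where k="int t - 2 * int n"]) auto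
next
  case False
  have "int n - int t - 1 \<ge> - (int n div 2)"
  proof (rule ccontr)
    assume "\<not> ?thesis"
    hence "int n = 2 * (int n div 2) + 1" "int t = int n + int n div 2" using False mfacts[of n] by linarith+
    thus False using assms by simp
  qed
  thus ?thesis using assms False mfacts[of n] by (intro disjI2 Q1_I3[where k="int n - int t - 1"]) auto
qed



lemma shift_iff:
  assumes "(y::nat) < N" "i < N" "c \<le> N"
  shows "(y + c) mod N = i \<longleftrightarrow> y = (i + (N - c)) mod N"
proof
  assume h: "(y + c) mod N = i"
  have "(i + (N - c)) mod N = ((y + c) mod N + (N - c)) mod N" using h by simp
  also have "\<dots> = (y + c + (N - c)) mod N" by (rule mod_add_left_eq)
  also have "y + c + (N - c) = y + N" using assms by simp
  finally show "y = (i + (N - c)) mod N" using assms by simp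
next
  assume h: "y = (i + (N - c)) mod N"
  have "(y + c) mod N = ((i + (N - c)) mod N + c) mod N" using h by simp
  also have "\<dots> = (i + (N - c) + c) mod N" by (rule mod_add_left_eq)
  also have "i + (N - c) + c = i + N" using assms by simp
  finally show "(y + c) mod N = i" using assms by simp
qed

lemma sig_nat_int:
  assumes "n \<ge> 1" "i < 4*n"
  shows "int (sigL n i) = (int i * (2 * int n - 1)) mod (4 * int n)"
proof -
  have "int (sigL n i) = int ((i * (2*n - 1)) mod (4*n))" using sig_eq[OF assms] by simp
  also have "\<dots> = (int i * (2 * int n - 1)) mod (4 * int n)" using assms(1)
    by (simp add: of_nat_mod of_nat_diff)
  finally show ?thesis .
qed

lemma sig_int:
  assumes "n \<ge> 1"
  shows "int (sigL n (nat (x mod (4 * int n)))) = (x * (2 * int n - 1)) mod (4 * int n)"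
proof -
  have lt: "nat (x mod (4 * int n)) < 4*n" using assms by (simp add: nat_less_iff)
  have "int (sigL n (nat (x mod (4 * int n)))) = ((x mod (4 * int n)) * (2 * int n - 1)) mod (4 * int n)"
    using sig_nat_int[OF assms lt] assms by simp
  also have "\<dots> = (x * (2 * int n - 1)) mod (4 * int n)" by (simp add: mod_mult_left_eq)
  finally show ?thesis .
qed

lemma nat_as_mod: "i < 4*n \<Longrightarrow> i = nat (int i mod (4 * int n))"
  by (simp add: of_nat_mod[symmetric])

definition tau2 :: "nat \<Rightarrow> nat \<times> nat \<Rightarrow> nat \<times> nat" where
  "tau2 n x = (if snd x = 0 then (sigL n (fst x), 0) else ((sigL n (fst x) + 2*n + 2) mod (4*n), snd x))"

lemma tau2_int:
  assumes "n \<ge> 1"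
  shows "int ((sigL n (nat (x mod (4 * int n))) + 2*n + 2) mod (4*n)) = (x * (2 * int n - 1) + 2 * int n + 2) mod (4 * int n)"
proof -
  have "int ((sigL n (nat (x mod (4 * int n))) + 2*n + 2) mod (4*n)) = (int (sigL n (nat (x mod (4 * int n)))) + 2 * int n + 2) mod (4 * int n)"
    by (simp add: of_nat_mod ac_simps)
  also have "\<dots> = ((x * (2 * int n - 1)) mod (4 * int n) + (2 * int n + 2)) mod (4 * int n)"
    using sig_int[OF assms] by (simp add: add.assoc)
  also have "\<dots> = (x * (2 * int n - 1) + 2 * int n + 2) mod (4 * int n)" by (simp add: mod_add_left_eq add.assoc)
  finally show ?thesis .
qed

lemma modeq: "(a::int) = b + M * q \<Longrightarrow> a mod M = b mod M" by simp




lemma sig_lt: "i < 4*n \<Longrightarrow> sigL n i < 4*n" using sig_basic by blast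
lemma sig_invol: "i < 4*n \<Longrightarrow> sigL n (sigL n i) = i" using sig_basic by blast
lemma sig_inv: "i < 4*n \<Longrightarrow> z < 4*n \<Longrightarrow> sigL n z = i \<longleftrightarrow> z = sigL n i"
  using sig_invol by metis

lemma jflip: "y2 < 2 \<Longrightarrow> j < (2::nat) \<Longrightarrow> ((y2 + 1) mod 2 = j) = (y2 = 1 - j)"
  by presburger

lemma jflip': "y2 < 2 \<Longrightarrow> j < (2::nat) \<Longrightarrow> ((1 + y2) mod 2 = j) = (y2 = 1 - j)"
  by presburger

lemma sd_elem_dl: "sd_elem n m j = dl (nat (m mod int (4*n)), j)"
  by (simp add: sd_elem_def dl_def fun_eq_iff)

lemma b_dl: "n \<ge> 1 \<Longrightarrow> sd_b n = dl (0, 1)"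
  by (simp add: sd_elem_dl)

lemma cr_b:
  assumes n: "n \<ge> 1" and x: "(i, j) \<in> sd_grp n"
  shows "sd_conv n \<alpha> (dl (0,1)) (i, j) = \<alpha> (i, 1 - j)"
proof -
  have "sd_conv n \<alpha> (dl (0,1)) (i, j) = (\<Sum>y\<in>sd_grp n. if sd_mul n y (0,1) = (i, j) then \<alpha> y else 0)"
    using n by (intro conv_right) (simp add: grp_iff)
  also have "\<dots> = \<alpha> (i, 1 - j)"
  proof (rule sum_uniq[OF fin_grp])
    show "(i, 1 - j) \<in> sd_grp n" using x by (simp add: grp_iff)
    fix y assume y: "y \<in> sd_grp n"
    obtain y1 y2 where yy: "y = (y1, y2)" by (cases y)
    show "sd_mul n y (0, 1) = (i, j) \<longleftrightarrow> y = (i, 1 - j)"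
      using y x jflip[of y2 j] unfolding yy by (simp add: sd_mul_def grp_iff)
  qed
  finally show ?thesis .
qed

lemma cl_b:
  assumes n: "n \<ge> 1" and x: "(i, j) \<in> sd_grp n"
  shows "sd_conv n (dl (0,1)) \<alpha> (i, j) = \<alpha> (sigL n i, 1 - j)"
proof -
  have "sd_conv n (dl (0,1)) \<alpha> (i, j) = (\<Sum>z\<in>sd_grp n. if sd_mul n (0,1) z = (i, j) then \<alpha> z else 0)"
    using n by (intro conv_left) (simp add: grp_iff)
  also have "\<dots> = \<alpha> (sigL n i, 1 - j)"
  proof (rule sum_uniq[OF fin_grp])
    show "(sigL n i, 1 - j) \<in> sd_grp n" using x by (simp add: grp_iff sig_lt)
    fix y assume y: "y \<in> sd_grp n"
    obtain y1 y2 where yy: "y = (y1, y2)" by (cases y)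
    have "(y1 * (2*n-1)) mod (4*n) = sigL n y1" using y sig_eq[OF n] unfolding yy by (simp add: grp_iff)
    hence "sd_mul n (0,1) y = (sigL n y1, (1 + y2) mod 2)"
      unfolding yy by (simp add: sd_mul_def)
    thus "sd_mul n (0, 1) y = (i, j) \<longleftrightarrow> y = (sigL n i, 1 - j)"
      using y x sig_inv[of i n y1] jflip'[of y2 j] unfolding yy by (auto simp: grp_iff)
  qed
  finally show ?thesis .
qed

definition tau1 :: "nat \<Rightarrow> nat \<times> nat \<Rightarrow> nat \<times> nat" where
  "tau1 n x = (sigL n (fst x), snd x)"

lemma anti_b:
  assumes n: "n \<ge> 1"
  shows "anti_cent n (sd_b n :: _ \<Rightarrow> 'a::field) =
    {f. (\<forall>x. x \<notin> sd_grp n \<longrightarrow> f x = 0) \<and> (\<forall>x\<in>sd_grp n. f (tau1 n x) = - f x)}"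
  unfolding b_dl[OF n]
proof (rule anti_char[OF n, where r = "\<lambda>x. (fst x, 1 - snd x)" and l = "\<lambda>x. (sigL n (fst x), 1 - snd x)"
      and s = "\<lambda>x. (fst x, 1 - snd x)"])
  fix \<alpha> :: "_ \<Rightarrow> 'a" and x assume "x \<in> sd_grp n"
  thus "sd_conv n \<alpha> (dl (0, 1)) x = \<alpha> (fst x, 1 - snd x)"
    using cr_b[OF n] by (cases x) auto
  show "sd_conv n (dl (0, 1)) \<alpha> x = \<alpha> (sigL n (fst x), 1 - snd x)"
    using cl_b[OF n] \<open>x \<in> _\<close> by (cases x) auto
next
  fix y assume "y \<in> sd_grp n"
  thus "(fst y, 1 - snd y) \<in> sd_grp n \<and> (fst (fst y, 1 - snd y), 1 - snd (fst y, 1 - snd y)) = y \<and>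
         (sigL n (fst (fst y, 1 - snd y)), 1 - snd (fst y, 1 - snd y)) = tau1 n y"
    by (cases y) (auto simp: grp_iff tau1_def)
next
  fix x assume "x \<in> sd_grp n"
  thus "(fst x, 1 - snd x) \<in> sd_grp n \<and> tau1 n (fst x, 1 - snd x) = (sigL n (fst x), 1 - snd x)"
    by (cases x) (auto simp: grp_iff tau1_def)
qed


lemma sig_modn:
  assumes "n \<ge> 1"
  shows "int (sigL n (a mod (4*n))) = (int a * (2 * int n - 1)) mod (4 * int n)"
proof -
  have "a mod (4*n) = nat (int a mod (4 * int n))" using zmod_int[of a "4*n"] by simp
  thus ?thesis using sig_int[OF assms, of "int a"] by simp
qed

lemma tau2_modn:
  assumes "n \<ge> 1"
  shows "int ((sigL n (a mod (4*n)) + 2*n + 2) mod (4*n)) = (int a * (2 * int n - 1) + 2 * int n + 2) mod (4 * int n)"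
proof -
  have "a mod (4*n) = nat (int a mod (4 * int n))" using zmod_int[of a "4*n"] by simp
  thus ?thesis using tau2_int[OF assms, of "int a"] by simp
qed

lemma ab_dl: "n \<ge> 1 \<Longrightarrow> sd_conv n (sd_a n) (sd_b n) = (dl (1, 1) :: _ \<Rightarrow> 'a::field)"
proof -
  assume n: "n \<ge> 1"
  have a: "sd_a n = (dl (1, 0) :: _ \<Rightarrow> 'a)" using n by (simp add: sd_elem_dl)
  have "sd_conv n (dl (1,0)) (dl (0,1)) = (dl (sd_mul n (1,0) (0,1)) :: _ \<Rightarrow> 'a)"
    using n by (intro conv_dd) (auto simp: grp_iff)
  moreover have "sd_mul n (1,0) (0,1) = (1,1)" using n by (simp add: sd_mul_def)
  moreover have b: "sd_b n = (dl (0, 1) :: _ \<Rightarrow> 'a)" by (rule b_dl[OF n])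
  ultimately show ?thesis using a by simp
qed

definition r_ab :: "nat \<Rightarrow> nat \<times> nat \<Rightarrow> nat \<times> nat" where
  "r_ab n x = (if snd x = 1 then ((fst x + (4*n - 1)) mod (4*n), 0) else ((fst x + (4*n - (2*n - 1))) mod (4*n), 1))"
definition l_ab :: "nat \<Rightarrow> nat \<times> nat \<Rightarrow> nat \<times> nat" where
  "l_ab n x = (sigL n ((fst x + (4*n - 1)) mod (4*n)), 1 - snd x)"
definition s_ab :: "nat \<Rightarrow> nat \<times> nat \<Rightarrow> nat \<times> nat" where
  "s_ab n x = (if snd x = 0 then ((fst x + 1) mod (4*n), 1) else ((fst x + (2*n - 1)) mod (4*n), 0))"

lemma cr_ab:
  assumes n: "n \<ge> 1" and x: "x \<in> sd_grp n"
  shows "sd_conv n \<alpha> (dl (1,1)) x = \<alpha> (r_ab n x)"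
proof -
  obtain i j where xx: "x = (i, j)" by (cases x)
  have ij: "i < 4*n" "j < 2" using x xx by (auto simp: grp_iff)
  have "sd_conv n \<alpha> (dl (1,1)) x = (\<Sum>y\<in>sd_grp n. if sd_mul n y (1,1) = x then \<alpha> y else 0)"
    using n by (intro conv_right) (simp add: grp_iff)
  also have "\<dots> = \<alpha> (r_ab n x)"
  proof (rule sum_uniq[OF fin_grp])
    show "r_ab n x \<in> sd_grp n" using n by (simp add: r_ab_def grp_iff)
    fix y assume y: "y \<in> sd_grp n"
    obtain y1 y2 where yy: "y = (y1, y2)" by (cases y)
    have y12: "y1 < 4*n" "y2 < 2" using y yy by (auto simp: grp_iff)
    show "sd_mul n y (1, 1) = x \<longleftrightarrow> y = r_ab n x"
    proof (cases "y2 = 0")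
      case True
      have "sd_mul n y (1,1) = ((y1 + 1) mod (4*n), 1)" using True yy by (simp add: sd_mul_def)
      moreover have "(y1 + 1) mod (4*n) = i \<longleftrightarrow> y1 = (i + (4*n - 1)) mod (4*n)"
        using shift_iff[of y1 "4*n" i 1] y12 ij n by simp
      ultimately show ?thesis using True yy xx ij by (auto simp: r_ab_def)
    next
      case False
      hence y21: "y2 = 1" using y12 by simp
      have "sd_mul n y (1,1) = ((y1 + (2*n - 1)) mod (4*n), 0)" using y21 yy by (simp add: sd_mul_def)
      moreover have "(y1 + (2*n-1)) mod (4*n) = i \<longleftrightarrow> y1 = (i + (4*n - (2*n-1))) mod (4*n)"
        using shift_iff[of y1 "4*n" i "2*n-1"] y12 ij n by simp
      ultimately show ?thesis using y21 yy xx ij by (auto simp: r_ab_def)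
    qed
  qed
  finally show ?thesis .
qed

lemma cl_ab:
  assumes n: "n \<ge> 1" and x: "x \<in> sd_grp n"
  shows "sd_conv n (dl (1,1)) \<alpha> x = \<alpha> (l_ab n x)"
proof -
  obtain i j where xx: "x = (i, j)" by (cases x)
  have ij: "i < 4*n" "j < 2" using x xx by (auto simp: grp_iff)
  have "sd_conv n (dl (1,1)) \<alpha> x = (\<Sum>z\<in>sd_grp n. if sd_mul n (1,1) z = x then \<alpha> z else 0)"
    using n by (intro conv_left) (simp add: grp_iff)
  also have "\<dots> = \<alpha> (l_ab n x)"
  proof (rule sum_uniq[OF fin_grp])
    show "l_ab n x \<in> sd_grp n" using n ij xx by (simp add: l_ab_def grp_iff sig_lt)
    fix y assume y: "y \<in> sd_grp n"
    obtain y1 y2 where yy: "y = (y1, y2)" by (cases y)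
    have y12: "y1 < 4*n" "y2 < 2" using y yy by (auto simp: grp_iff)
    have "(1 + y1 * (2*n-1)) mod (4*n) = ((y1 * (2*n-1)) mod (4*n) + 1) mod (4*n)"
      by (simp add: mod_Suc_eq)
    also have "\<dots> = (sigL n y1 + 1) mod (4*n)" using sig_eq[OF n y12(1)] by simp
    finally have m1: "sd_mul n (1,1) y = ((sigL n y1 + 1) mod (4*n), (1 + y2) mod 2)"
      using yy by (simp add: sd_mul_def)
    have "(sigL n y1 + 1) mod (4*n) = i \<longleftrightarrow> sigL n y1 = (i + (4*n - 1)) mod (4*n)"
      using shift_iff[of "sigL n y1" "4*n" i 1] y12 ij n sig_lt by simp
    also have "\<dots> \<longleftrightarrow> y1 = sigL n ((i + (4*n - 1)) mod (4*n))"
      using sig_inv[of "(i + (4*n - 1)) mod (4*n)" n y1] y12 n by simp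
    finally show "sd_mul n (1, 1) y = x \<longleftrightarrow> y = l_ab n x"
      using m1 jflip'[of y2 j] y12 ij unfolding xx yy l_ab_def by auto
  qed
  finally show ?thesis .
qed

lemma anti_ab:
  assumes n: "n \<ge> 1"
  shows "anti_cent n (sd_conv n (sd_a n) (sd_b n) :: _ \<Rightarrow> 'a::field) =
    {f. (\<forall>x. x \<notin> sd_grp n \<longrightarrow> f x = 0) \<and> (\<forall>x\<in>sd_grp n. f (tau2 n x) = - f x)}"
  unfolding ab_dl[OF n]
proof (rule anti_char[OF n, where r = "r_ab n" and l = "l_ab n" and s = "s_ab n"])
  fix \<alpha> :: "_ \<Rightarrow> 'a" and x assume "x \<in> sd_grp n"
  thus "sd_conv n \<alpha> (dl (1, 1)) x = \<alpha> (r_ab n x)" by (rule cr_ab[OF n])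
  show "sd_conv n (dl (1, 1)) \<alpha> x = \<alpha> (l_ab n x)" using cl_ab[OF n] \<open>x \<in> _\<close> by blast
next
  fix y assume y: "y \<in> sd_grp n"
  obtain i j where yy: "y = (i, j)" by (cases y)
  have ij: "i < 4*n" "j < 2" using y yy by (auto simp: grp_iff)
  show "s_ab n y \<in> sd_grp n \<and> r_ab n (s_ab n y) = y \<and> l_ab n (s_ab n y) = tau2 n y"
  proof (cases "j = 0")
    case True
    have e: "((i + 1) mod (4*n) + (4*n - 1)) mod (4*n) = i"
    proof -
      have "((i + 1) mod (4*n) + (4*n - 1)) mod (4*n) = (i + 1 + (4*n - 1)) mod (4*n)" by (rule mod_add_left_eq)
      also have "i + 1 + (4*n - 1) = i + 4*n" using n by simp
      finally show ?thesis using ij by simp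
    qed
    show ?thesis using True yy e n by (simp add: s_ab_def r_ab_def l_ab_def tau2_def grp_iff)
  next
    case False
    hence j1: "j = 1" using ij by simp
    have e: "((i + (2*n - 1)) mod (4*n) + (4*n - (2*n - 1))) mod (4*n) = i"
    proof -
      have "((i + (2*n - 1)) mod (4*n) + (4*n - (2*n - 1))) mod (4*n) = (i + (2*n - 1) + (4*n - (2*n - 1))) mod (4*n)" by (rule mod_add_left_eq)
      also have "i + (2*n - 1) + (4*n - (2*n - 1)) = i + 4*n" using n by simp
      finally show ?thesis using ij by simp
    qed
    have e2: "sigL n (((i + (2*n - 1)) mod (4*n) + (4*n - 1)) mod (4*n)) = (sigL n i + 2*n + 2) mod (4*n)"
    proof -
      have "((i + (2*n - 1)) mod (4*n) + (4*n - 1)) mod (4*n) = (i + (2*n - 1) + (4*n - 1)) mod (4*n)" by (rule mod_add_left_eq)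
      hence "int (sigL n (((i + (2*n - 1)) mod (4*n) + (4*n - 1)) mod (4*n))) = (int (i + (2*n - 1) + (4*n - 1)) * (2 * int n - 1)) mod (4 * int n)"
        using sig_modn[OF n] by simp
      also have "\<dots> = (int i * (2 * int n - 1) + 2 * int n + 2 + 4 * int n * (3 * int n - 3)) mod (4 * int n)"
        using n by (intro arg_cong[where f="\<lambda>t. t mod (4 * int n)"]) (simp add: of_nat_diff algebra_simps)
      also have "\<dots> = (int i * (2 * int n - 1) + 2 * int n + 2) mod (4 * int n)" by simp
      also have "\<dots> = int ((sigL n (i mod (4*n)) + 2*n + 2) mod (4*n))" using tau2_modn[OF n] by simp
      finally show ?thesis using ij by simp
    qed
    show ?thesis using j1 yy e e2 n by (simp add: s_ab_def r_ab_def l_ab_def tau2_def grp_iff)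
  qed
next
  fix x assume x: "x \<in> sd_grp n"
  obtain i j where xx: "x = (i, j)" by (cases x)
  have ij: "i < 4*n" "j < 2" using x xx by (auto simp: grp_iff)
  show "r_ab n x \<in> sd_grp n \<and> tau2 n (r_ab n x) = l_ab n x"
  proof (cases "j = 1")
    case True thus ?thesis using xx n by (simp add: r_ab_def l_ab_def tau2_def grp_iff)
  next
    case False
    hence j0: "j = 0" using ij by simp
    have e2: "(sigL n ((i + (4*n - (2*n - 1))) mod (4*n)) + 2*n + 2) mod (4*n) = sigL n ((i + (4*n - 1)) mod (4*n))"
    proof -
      have "int ((sigL n ((i + (4*n - (2*n - 1))) mod (4*n)) + 2*n + 2) mod (4*n))
          = (int (i + (4*n - (2*n - 1))) * (2 * int n - 1) + 2 * int n + 2) mod (4 * int n)"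
        by (rule tau2_modn[OF n])
      also have "\<dots> = (int (i + (4*n - 1)) * (2 * int n - 1) + 4 * int n * (2 - int n)) mod (4 * int n)"
        using n by (intro arg_cong[where f="\<lambda>t. t mod (4 * int n)"]) (simp add: of_nat_diff algebra_simps)
      also have "\<dots> = (int (i + (4*n - 1)) * (2 * int n - 1)) mod (4 * int n)" by simp
      also have "\<dots> = int (sigL n ((i + (4*n - 1)) mod (4*n)))" using sig_modn[OF n] by simp
      finally show ?thesis by simp
    qed
    show ?thesis using j0 xx n e2 by (simp add: r_ab_def l_ab_def tau2_def grp_iff)
  qed
qed




lemma Q1_lt: "n \<ge> 1 \<Longrightarrow> Q1 n i \<Longrightarrow> i < 4*n"
  unfolding Q1_def using mfacts[of n] by (auto split: if_splits)

lemma disj0: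
  assumes n: "n \<ge> 1" and q: "Q1 n i"
  shows "\<not> Q1 n (sigL n i)"
proof -
  from q consider (a) k where "1 \<le> k" "k \<le> int n - 1" "int i = 2*k"
    | (b) k where "0 \<le> k" "k \<le> int n div 2 - 1" "int i = 2*k+1"
    | (c) k where "- (int n div 2) \<le> k" "k < 0" "int i = 4*int n + 2*k+1"
    unfolding Q1_def by (auto split: if_splits)
  thus ?thesis
  proof cases
    case a
    have "i = 2 * nat k" using a by simp
    hence "sigL n i = 4*n - i" by (rule sig_ev) (use a in simp)
    moreover have "int (4*n - i) = 4 * int n - 2*k" using a by (simp add: of_nat_diff)
    ultimately show ?thesis using Q1_ev[of "sigL n i" n k] a by simp
  next
    case b
    have "i = 2 * nat k + 1" using b by simp
    hence "sigL n i = 2*n - i" by (rule sig_lo) (use b mfacts[of n] in simp)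
    moreover have "int (2*n - i) = 2 * int n - 2*k - 1" using b mfacts[of n] by (simp add: of_nat_diff)
    moreover have "- (int n div 2) \<le> k" using b by simp
    ultimately show ?thesis using Q1_od[of "sigL n i" n k] b by simp
  next
    case c
    have "i = 2 * nat (2 * int n + k) + 1" using c mfacts[of n] by simp
    hence "sigL n i = 6*n - i" by (rule sig_hi) (use c mfacts[of n] in simp)
    moreover have "int (6*n - i) = 2 * int n - 2*k - 1" using c mfacts[of n] by (simp add: of_nat_diff)
    ultimately show ?thesis using Q1_od[of "sigL n i" n k] c by simp
  qed
qed

lemma cov0:
  assumes i: "i < 4*n" and ne: "sigL n i \<noteq> i"
  shows "Q1 n i \<or> Q1 n (sigL n i)"
proof (cases "even i")
  case True
  then obtain t where t: "i = 2*t" by blast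
  have "t \<noteq> 0"
  proof
    assume "t = 0" hence "i = 0" using t by simp
    thus False using ne by (simp add: sigL_def)
  qed
  hence s: "sigL n i = 4*n - i" using t sig_ev by simp
  show ?thesis using cov_ev[OF t _ i] s ne \<open>t \<noteq> 0\<close> by simp
next
  case False
  then obtain t where t: "i = 2*t+1" using oddE by blast
  show ?thesis
  proof (cases "i \<le> 2*n")
    case True
    thus ?thesis using cov_lo[OF t True] sig_lo[OF t True] ne by simp
  next
    case False
    hence "2*n < i" by simp
    thus ?thesis using cov_hi[OF t _ i] sig_hi[OF t] ne by simp
  qed
qed




definition Q2 :: "nat \<Rightarrow> nat \<Rightarrow> bool" where
  "Q2 n i \<longleftrightarrow> (\<exists>k::int. 1 \<le> k \<and> k \<le> int n - 1 \<and> int i = 2*k+1) \<or>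
     (\<exists>k::int. - (int n div 2) \<le> k \<and> k \<le> int n div 2 - 1 \<and> int i = (if k \<ge> -1 then 2*k+2 else 4*int n + 2*k + 2))"

lemma Q2_I1: "1 \<le> k \<Longrightarrow> k \<le> int n - 1 \<Longrightarrow> int i = 2*k+1 \<Longrightarrow> Q2 n i"
  unfolding Q2_def by blast
lemma Q2_I2: "-1 \<le> k \<Longrightarrow> - (int n div 2) \<le> k \<Longrightarrow> k \<le> int n div 2 - 1 \<Longrightarrow> int i = 2*k+2 \<Longrightarrow> Q2 n i"
  unfolding Q2_def by (intro disjI2 exI[of _ k]) simp
lemma Q2_I3: "- (int n div 2) \<le> k \<Longrightarrow> k < -1 \<Longrightarrow> int i = 4*int n + 2*k+2 \<Longrightarrow> Q2 n i"
  unfolding Q2_def by (intro disjI2 exI[of _ k]) simp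

lemma Q2_lt: "n \<ge> 1 \<Longrightarrow> Q2 n i \<Longrightarrow> i < 4*n"
  unfolding Q2_def using mfacts[of n] by (auto split: if_splits)

lemma Q2_na: "int v = 4*int n + 1 - 2*k \<Longrightarrow> 1 \<le> k \<Longrightarrow> k \<le> int n - 1 \<Longrightarrow> \<not> Q2 n v"
  unfolding Q2_def by (auto split: if_splits; presburger)

lemma Q2_nb: "int v = 2*int n - 2*k \<Longrightarrow> - (int n div 2) \<le> k \<Longrightarrow> k \<le> int n div 2 - 1 \<Longrightarrow> \<not> Q2 n v"
  unfolding Q2_def by (auto split: if_splits; presburger)

definition t2 :: "nat \<Rightarrow> nat \<Rightarrow> nat" where
  "t2 n i = (sigL n i + 2*n + 2) mod (4*n)"

lemma t2_int: "n \<ge> 1 \<Longrightarrow> i < 4*n \<Longrightarrow> int (t2 n i) = (int i * (2 * int n - 1) + 2 * int n + 2) mod (4 * int n)"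
  using tau2_modn[of n i] by (simp add: t2_def)

lemma t2_lt: "n \<ge> 1 \<Longrightarrow> t2 n i < 4*n" by (simp add: t2_def)

lemma t2_invol:
  assumes n: "n \<ge> 1" and i: "i < 4*n"
  shows "t2 n (t2 n i) = i"
proof -
  have "int (t2 n (t2 n i)) = (int (t2 n i) * (2 * int n - 1) + 2 * int n + 2) mod (4 * int n)"
    using t2_int[OF n t2_lt[OF n]] by simp
  also have "\<dots> = (((int i * (2 * int n - 1) + 2 * int n + 2) mod (4 * int n)) * (2 * int n - 1) + (2 * int n + 2)) mod (4 * int n)"
    using t2_int[OF n i] by (simp add: add.assoc)
  also have "\<dots> = ((int i * (2 * int n - 1) + 2 * int n + 2) * (2 * int n - 1) + (2 * int n + 2)) mod (4 * int n)"
    by (metis mod_add_left_eq mod_mult_left_eq)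
  also have "\<dots> = (int i + 4 * int n * (int i * (int n - 1) + int n + 1)) mod (4 * int n)"
    by (intro arg_cong[where f="\<lambda>t. t mod (4 * int n)"]) (simp add: algebra_simps)
  also have "\<dots> = int i" using i by simp
  finally show ?thesis by simp
qed

lemma zmod_small: "0 \<le> (e::int) \<Longrightarrow> e < M \<Longrightarrow> e mod M = e" by simp
lemma zmod_neg: "- M \<le> (e::int) \<Longrightarrow> e < 0 \<Longrightarrow> e mod M = e + M"
proof -
  assume a: "- M \<le> e" "e < 0"
  have "e mod M = (e + M) mod M" by simp
  also have "\<dots> = e + M" using a by (intro zmod_small) auto
  finally show ?thesis .
qed

lemma disj1:
  assumes n: "n \<ge> 1" and q: "Q2 n i"
  shows "\<not> Q2 n (t2 n i)"
proof -
  have i: "i < 4*n" using Q2_lt[OF n q] .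
  from q consider (a) k where "1 \<le> k" "k \<le> int n - 1" "int i = 2*k+1"
    | (b) k where "-1 \<le> k" "- (int n div 2) \<le> k" "k \<le> int n div 2 - 1" "int i = 2*k+2"
    | (c) k where "- (int n div 2) \<le> k" "k < -1" "int i = 4*int n + 2*k+2"
    unfolding Q2_def by (auto split: if_splits)
  thus ?thesis
  proof cases
    case a
    have "int (t2 n i) = ((4 * int n + 1 - 2*k) + 4 * int n * k) mod (4 * int n)"
      unfolding t2_int[OF n i] using a by (intro arg_cong[where f="\<lambda>t. t mod (4 * int n)"]) (simp add: algebra_simps)
    also have "\<dots> = 4 * int n + 1 - 2*k" using a by simp
    finally show ?thesis using Q2_na[of "t2 n i" n k] a by simp
  next
    case b
    have "int (t2 n i) = ((2 * int n - 2*k) + 4 * int n * (k+1)) mod (4 * int n)"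
      unfolding t2_int[OF n i] using b by (intro arg_cong[where f="\<lambda>t. t mod (4 * int n)"]) (simp add: algebra_simps)
    also have "\<dots> = 2 * int n - 2*k" using b mfacts[of n] by (subst mod_mult_self2, intro zmod_small) auto
    finally show ?thesis using Q2_nb[of "t2 n i" n k] b mfacts[of n] by simp
  next
    case c
    have "int (t2 n i) = ((2 * int n - 2*k) + 4 * int n * (k + 1 + (2 * int n - 1))) mod (4 * int n)"
      unfolding t2_int[OF n i] using c by (intro arg_cong[where f="\<lambda>t. t mod (4 * int n)"]) (simp add: algebra_simps)
    also have "\<dots> = 2 * int n - 2*k" using c mfacts[of n] by (subst mod_mult_self2, intro zmod_small) auto
    finally show ?thesis using Q2_nb[of "t2 n i" n k] c mfacts[of n] by simp
  qed
qed

lemma cov1: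
  assumes n: "n \<ge> 1" and i: "i < 4*n" and ne: "t2 n i \<noteq> i"
  shows "Q2 n i \<or> Q2 n (t2 n i)"
proof (cases "even i")
  case False
  then obtain t where t: "i = 2*t+1" using oddE by blast
  have "int (t2 n i) = ((1 - 2 * int t) + 4 * int n * (int t + 1)) mod (4 * int n)"
    unfolding t2_int[OF n i] using t by (intro arg_cong[where f="\<lambda>t. t mod (4 * int n)"]) (simp add: algebra_simps)
  hence v: "int (t2 n i) = (1 - 2 * int t) mod (4 * int n)" by simp
  show ?thesis
  proof (cases "t = 0")
    case True thus ?thesis using v ne t n by simp
  next
    case False
    have v2: "int (t2 n i) = 4 * int n + 1 - 2 * int t" using v False i t by (simp add: zmod_neg)
    consider "t \<le> n - 1" | "t = n" | "t \<ge> n + 1" by linarith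
    thus ?thesis
    proof cases
      case 1 thus ?thesis using False t by (intro disjI1 Q2_I1[of "int t"]) auto
    next
      case 2 thus ?thesis using v2 ne t by simp
    next
      case 3 thus ?thesis using v2 t i by (intro disjI2 Q2_I1[of "2 * int n - int t"]) auto
    qed
  qed
next
  case True
  then obtain t where t: "i = 2*t" by blast
  have "int (t2 n i) = ((2 * int n + 2 - 2 * int t) + 4 * int n * int t) mod (4 * int n)"
    unfolding t2_int[OF n i] using t by (intro arg_cong[where f="\<lambda>t. t mod (4 * int n)"]) (simp add: algebra_simps)
  hence v: "int (t2 n i) = (2 * int n + 2 - 2 * int t) mod (4 * int n)" by simp
  have m1: "int n div 2 \<ge> 1"
  proof (rule ccontr)
    assume "\<not> ?thesis"
    hence "n = 1" using n mfacts[of n] by linarith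
    moreover have "t2 1 i = i" using i \<open>n = 1\<close> unfolding t2_def sigL_def
      by (cases i; cases "i - 1"; cases "i - 2"; cases "i - 3"; simp)
    ultimately show False using ne by simp
  qed
  consider "int t \<le> int n div 2" | "int t \<ge> 2 * int n - int n div 2 + 1"
    | "int n div 2 + 1 \<le> int t" "int t \<le> int n + 1" "int t < 2 * int n - int n div 2 + 1"
    | "int n + 2 \<le> int t" "int t < 2 * int n - int n div 2 + 1" by linarith
  thus ?thesis
  proof cases
    case 1 thus ?thesis using t m1 by (intro disjI1 Q2_I2[of "int t - 1"]) auto
  next
    case 2 thus ?thesis using t i mfacts[of n] by (intro disjI1 Q2_I3[where k="int t - 2 * int n - 1"]) auto
  next
    case 3
    have v2: "int (t2 n i) = 2 * int n + 2 - 2 * int t" using v 3 mfacts[of n] n by (intro trans[OF v] zmod_small) auto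
    show ?thesis
    proof (cases "int n - int t \<le> int n div 2 - 1")
      case True thus ?thesis using v2 3 m1 by (intro disjI2 Q2_I2[of "int n - int t"]) auto
    next
      case False
      hence "int n = 2 * (int n div 2) + 1" "int t = int n div 2 + 1" using 3 mfacts[of n] by linarith+
      hence "int (t2 n i) = int i" using v2 t by simp
      thus ?thesis using ne by simp
    qed
  next
    case 4
    have v2: "int (t2 n i) = 6 * int n + 2 - 2 * int t" using v 4 mfacts[of n] n by (subst v, subst zmod_neg) auto
    show ?thesis
    proof (cases "int n - int t \<ge> - (int n div 2)")
      case True thus ?thesis using v2 4 by (intro disjI2 Q2_I3[where k="int n - int t"]) auto
    next
      case False
      hence "int n = 2 * (int n div 2) + 1" "int t = int n + int n div 2 + 1" using 4 mfacts[of n] by linarith+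
      hence "int (t2 n i) = int i" using v2 t by simp
      thus ?thesis using ne by simp
    qed
  qed
qed



lemma module_fscale: "module (fscale :: 'a::field \<Rightarrow> ('b \<Rightarrow> 'a) \<Rightarrow> _)"
  by unfold_locales (auto simp: fscale_def fun_eq_iff algebra_simps)

lemma two_ne_zero_char:
  assumes "CHAR('a::field) = 0 \<or> (prime (CHAR('a)) \<and> odd (CHAR('a)))"
  shows "(2::'a) \<noteq> 0"
proof
  assume "(2::'a) = 0"
  hence "of_nat 2 = (0::'a)" by simp
  hence "CHAR('a) dvd 2" by (simp only: of_nat_eq_0_iff_char_dvd)
  with assms show False
  proof (cases "CHAR('a) = 0")
    case True thus False using \<open>CHAR('a) dvd 2\<close> by simp
  next
    case False
    hence p: "prime (CHAR('a))" "odd (CHAR('a))" using assms by auto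
    hence "CHAR('a) \<le> 2" using \<open>CHAR('a) dvd 2\<close> by (simp add: dvd_imp_le)
    moreover have "CHAR('a) \<ge> 2" using p prime_ge_2_nat by blast
    ultimately show False using p by simp
  qed
qed



lemma basis_gen:
  fixes \<tau> :: "'b \<Rightarrow> 'b" and S P :: "'b set"
  assumes fin: "finite S" and tauS: "\<forall>x\<in>S. \<tau> x \<in> S" and inv: "\<forall>x\<in>S. \<tau> (\<tau> x) = x"
    and PS: "P \<subseteq> S" and disj: "\<forall>p\<in>P. \<tau> p \<notin> P"
    and cov: "\<forall>x\<in>S. \<tau> x \<noteq> x \<longrightarrow> x \<in> P \<or> \<tau> x \<in> P"
    and two: "(2::'a::field) \<noteq> 0"
  shows "is_basis_of ((\<lambda>p. dl p - dl (\<tau> p)) ` P)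
     {f::'b\<Rightarrow>'a. (\<forall>x. x \<notin> S \<longrightarrow> f x = 0) \<and> (\<forall>x\<in>S. f (\<tau> x) = - f x)}"
proof -
  interpret m: module "fscale :: 'a \<Rightarrow> ('b \<Rightarrow> 'a) \<Rightarrow> _" by (rule module_fscale)
  define D where "D = (\<lambda>p. dl p - dl (\<tau> p) :: 'b \<Rightarrow> 'a)"
  have finP: "finite P" using fin PS finite_subset by blast
  have tne: "\<tau> p \<noteq> p" if "p \<in> P" for p using disj that by metis
  have tinj: "x = y" if "x \<in> S" "y \<in> S" "\<tau> x = \<tau> y" for x y using inv that by metis
  have Dp: "D q p = (if p = q then 1 else 0)" if "p \<in> P" "q \<in> P" for p q
    using that disj by (auto simp: D_def dl_def)
  have injD: "inj_on D P"
  proof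
    fix p q assume pq: "p \<in> P" "q \<in> P" "D p = D q"
    show "p = q"
    proof (rule ccontr)
      assume "p \<noteq> q"
      hence "D q p = 0" using Dp[of p q] pq by simp
      moreover have "D p p = 1" using Dp[of p p] pq(1) by simp
      ultimately show False using pq(3) by (metis zero_neq_one)
    qed
  qed
  have sumD: "(\<Sum>v\<in>D ` P. fscale (u v) v) = (\<Sum>p\<in>P. fscale (u (D p)) (D p))" for u
    using sum.reindex[OF injD] by (simp add: comp_def)
  have sumapp: "(\<Sum>p\<in>P. fscale (c p) (D p)) x = (\<Sum>p\<in>P. c p * D p x)" for c x
    by (induction P rule: infinite_finite_induct) (auto simp: fscale_def)
  have indep: "\<not> m.dependent (D ` P)"
  proof
    assume "m.dependent (D ` P)"
    then obtain u where u: "\<exists>v\<in>D ` P. u v \<noteq> 0" "(\<Sum>v\<in>D ` P. fscale (u v) v) = 0"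
      using m.dependent_finite finP by blast
    then obtain p where p: "p \<in> P" "u (D p) \<noteq> 0" by blast
    have "0 = (\<Sum>q\<in>P. fscale (u (D q)) (D q)) p" using u(2) sumD by simp
    also have "\<dots> = (\<Sum>q\<in>P. u (D q) * (if p = q then 1 else 0))"
      unfolding sumapp using Dp p(1) by (intro sum.cong) auto
    also have "\<dots> = (\<Sum>q\<in>P. if p = q then u (D q) else 0)" by (intro sum.cong) auto
    also have "\<dots> = u (D p)" using p(1) finP by (simp add: sum.delta)
    finally show False using p by simp
  qed
  have span: "m.span (D ` P) = {f. (\<forall>x. x \<notin> S \<longrightarrow> f x = 0) \<and> (\<forall>x\<in>S. f (\<tau> x) = - f x)}"
  proof (intro set_eqI iffI)
    fix f :: "'b \<Rightarrow> 'a" assume "f \<in> m.span (D ` P)"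
    then obtain u where f: "f = (\<Sum>v\<in>D ` P. fscale (u v) v)"
      using m.span_finite finP by blast
    define c where "c = (\<lambda>p. u (D p))"
    have fx: "f x = (\<Sum>p\<in>P. c p * D p x)" for x using f sumD sumapp c_def by simp
    show "f \<in> {f. (\<forall>x. x \<notin> S \<longrightarrow> f x = 0) \<and> (\<forall>x\<in>S. f (\<tau> x) = - f x)}"
    proof safe
      fix x assume "x \<notin> S"
      hence "D p x = 0" if "p \<in> P" for p using that PS tauS by (auto simp: D_def dl_def)
      thus "f x = 0" using fx by simp
    next
      fix x assume x: "x \<in> S"
      have "D p (\<tau> x) = - D p x" if "p \<in> P" for p
        using that PS x inv tinj[of x p] tinj[of "\<tau> x" p] tauS by (auto simp: D_def dl_def)
      hence "f (\<tau> x) = (\<Sum>p\<in>P. - (c p * D p x))" using fx by (intro trans[OF fx] sum.cong) auto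
      thus "f (\<tau> x) = - f x" using fx by (simp add: sum_negf)
    qed
  next
    fix f :: "'b \<Rightarrow> 'a" assume "f \<in> {f. (\<forall>x. x \<notin> S \<longrightarrow> f x = 0) \<and> (\<forall>x\<in>S. f (\<tau> x) = - f x)}"
    hence f0: "\<And>x. x \<notin> S \<Longrightarrow> f x = 0" and ft: "\<And>x. x \<in> S \<Longrightarrow> f (\<tau> x) = - f x" by auto
    have "f = (\<Sum>p\<in>P. fscale (f p) (D p))"
    proof
      fix x
      have "(\<Sum>p\<in>P. fscale (f p) (D p)) x = (\<Sum>p\<in>P. f p * D p x)" by (rule sumapp)
      also have "\<dots> = f x"
      proof (cases "x \<in> S")
        case False
        hence "D p x = 0" if "p \<in> P" for p using that PS tauS by (auto simp: D_def dl_def)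
        thus ?thesis using f0 False by simp
      next
        case xS: True
        show ?thesis
        proof (cases "x \<in> P")
          case True
          have "f p * D p x = (if p = x then f x else 0)" if "p \<in> P" for p
            using Dp[OF True that] by auto
          thus ?thesis using True finP by (simp add: sum.delta')
        next
          case xP: False
          show ?thesis
          proof (cases "\<tau> x = x")
            case True
            have "f x = - f x" using ft[OF xS] True by simp
            hence "2 * f x = 0" by (simp add: algebra_simps)
            hence fx0: "f x = 0" using two by simp
            have "D p x = 0" if "p \<in> P" for p
            proof -
              have "p \<in> S" using that PS by blast
              hence "x \<noteq> \<tau> p" using inv True that xP by metis
              moreover have "x \<noteq> p" using that xP by blast
              ultimately show ?thesis by (simp add: D_def dl_def)
            qed
            thus ?thesis using fx0 by simp
          next
            case False
            hence tP: "\<tau> x \<in> P" using cov xS xP by blast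
            have "f p * D p x = (if p = \<tau> x then f x else 0)" if "p \<in> P" for p
            proof -
              have "p \<in> S" using that PS by blast
              hence "(x = \<tau> p) = (p = \<tau> x)" using inv xS by metis
              thus ?thesis using that xP ft[OF xS] inv xS by (auto simp: D_def dl_def)
            qed
            thus ?thesis using tP finP by (simp add: sum.delta')
          qed
        qed
      qed
      finally show "f x = (\<Sum>p\<in>P. fscale (f p) (D p)) x" ..
    qed
    moreover have "(\<Sum>p\<in>P. fscale (f p) (D p)) \<in> m.span (D ` P)"
      by (intro m.span_sum m.span_scale m.span_base) auto
    ultimately show "f \<in> m.span (D ` P)" by simp
  qed
  show ?thesis unfolding is_basis_of_def using indep span D_def by simp
qed




lemma sd_elem_dl': "sd_elem n m j = dl (nat (m mod (4 * int n)), j)"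
  by (simp add: sd_elem_def dl_def fun_eq_iff)

lemma nmod_lt: "n \<ge> 1 \<Longrightarrow> nat (e mod (4 * int n)) < 4*n"
  by (simp add: nat_less_iff)

lemma elem_b:
  assumes n: "n \<ge> 1"
  shows "sd_conv n (sd_apow n e - sd_apow n e') (sd_b n) =
    (dl (nat (e mod (4 * int n)), 1) - dl (nat (e' mod (4 * int n)), 1) :: _ \<Rightarrow> 'a::field)"
proof -
  have b: "sd_b n = (dl (0, 1) :: _ \<Rightarrow> 'a)" by (rule b_dl[OF n])
  have m: "sd_conv n (dl (nat (x mod (4 * int n)), 0)) (dl (0,1)) = (dl (nat (x mod (4 * int n)), 1) :: _ \<Rightarrow> 'a)" for x
  proof -
    have "sd_conv n (dl (nat (x mod (4 * int n)), 0)) (dl (0,1)) = (dl (sd_mul n (nat (x mod (4 * int n)), 0) (0,1)) :: _ \<Rightarrow> 'a)"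
      using n nmod_lt[OF n, of x] by (intro conv_dd) (auto simp: grp_iff)
    moreover have "sd_mul n (nat (x mod (4 * int n)), 0) (0,1) = (nat (x mod (4 * int n)), 1)"
      using nmod_lt[OF n, of x] by (simp add: sd_mul_def)
    ultimately show ?thesis by simp
  qed
  have d: "sd_apow n e - sd_apow n e' = (dl (nat (e mod (4 * int n)), 0) - dl (nat (e' mod (4 * int n)), 0) :: _ \<Rightarrow> 'a)"
    by (simp add: sd_elem_dl')
  show ?thesis unfolding d b conv_diff m ..
qed

lemma conv_a:
  assumes n: "n \<ge> 1"
  shows "sd_conv n (sd_a n) (dl (nat (x mod (4 * int n)), 0)) = (dl (nat ((x + 1) mod (4 * int n)), 0) :: _ \<Rightarrow> 'a::field)"
proof -
  have a: "sd_a n = (dl (1, 0) :: _ \<Rightarrow> 'a)" using n by (simp add: sd_elem_dl')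
  have "sd_conv n (dl (1,0)) (dl (nat (x mod (4 * int n)), 0)) = (dl (sd_mul n (1,0) (nat (x mod (4 * int n)), 0)) :: _ \<Rightarrow> 'a)"
  proof (rule conv_dd[OF n])
    show "(1, 0) \<in> sd_grp n" using n by (simp add: grp_iff)
    show "(nat (x mod (4 * int n)), 0) \<in> sd_grp n" using nmod_lt[OF n, of x] by (simp add: grp_iff)
  qed
  moreover have "sd_mul n (1,0) (nat (x mod (4 * int n)), 0) = (nat ((x + 1) mod (4 * int n)), 0)"
  proof -
    have "int ((1 + nat (x mod (4 * int n))) mod (4 * n)) = (1 + x mod (4 * int n)) mod (4 * int n)"
      using n by (simp add: of_nat_mod)
    also have "\<dots> = (x + 1) mod (4 * int n)" by (simp add: mod_add_right_eq add.commute)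
    finally have "(1 + nat (x mod (4 * int n))) mod (4 * n) = nat ((x + 1) mod (4 * int n))" by simp
    thus ?thesis by (simp add: sd_mul_def)
  qed
  ultimately show ?thesis using a by simp
qed

lemma elem_ab:
  assumes n: "n \<ge> 1"
  shows "sd_conv n (sd_conv n (sd_a n) (sd_apow n e - sd_apow n e')) (sd_b n) =
    (dl (nat ((e+1) mod (4 * int n)), 1) - dl (nat ((e'+1) mod (4 * int n)), 1) :: _ \<Rightarrow> 'a::field)"
proof -
  have "sd_conv n (sd_a n) (sd_apow n e - sd_apow n e') = (sd_apow n (e+1) - sd_apow n (e'+1) :: _ \<Rightarrow> 'a)"
  proof -
    have d: "sd_apow n e - sd_apow n e' = (dl (nat (e mod (4 * int n)), 0) - dl (nat (e' mod (4 * int n)), 0) :: _ \<Rightarrow> 'a)"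
      by (simp add: sd_elem_dl')
    have d2: "sd_apow n (e+1) - sd_apow n (e'+1) = (dl (nat ((e+1) mod (4 * int n)), 0) - dl (nat ((e'+1) mod (4 * int n)), 0) :: _ \<Rightarrow> 'a)"
      by (simp add: sd_elem_dl')
    show ?thesis unfolding d d2 conv_diff2 conv_a[OF n] ..
  qed
  thus ?thesis using elem_b[OF n] by simp
qed

lemma tauA: "n \<ge> 1 \<Longrightarrow> sigL n (nat ((2*k) mod (4 * int n))) = nat ((-2*k) mod (4 * int n))"
proof -
  assume n: "n \<ge> 1"
  have "int (sigL n (nat ((2*k) mod (4 * int n)))) = (2*k * (2 * int n - 1)) mod (4 * int n)" by (rule sig_int[OF n])
  also have "\<dots> = (-2*k + 4 * int n * k) mod (4 * int n)"
    by (intro arg_cong[where f="\<lambda>t. t mod (4 * int n)"]) (simp add: algebra_simps)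
  also have "\<dots> = (-2*k) mod (4 * int n)" by (rule mod_mult_self2)
  finally show ?thesis by simp
qed

lemma tauB: "n \<ge> 1 \<Longrightarrow> sigL n (nat ((2*k+1) mod (4 * int n))) = nat ((2 * int n - (2*k+1)) mod (4 * int n))"
proof -
  assume n: "n \<ge> 1"
  have "int (sigL n (nat ((2*k+1) mod (4 * int n)))) = ((2*k+1) * (2 * int n - 1)) mod (4 * int n)" by (rule sig_int[OF n])
  also have "\<dots> = ((2 * int n - (2*k+1)) + 4 * int n * k) mod (4 * int n)" by (simp add: algebra_simps)
  also have "\<dots> = (2 * int n - (2*k+1)) mod (4 * int n)" by simp
  finally show ?thesis by simp
qed

lemma t2_nat_int: "n \<ge> 1 \<Longrightarrow> int (t2 n (nat (x mod (4 * int n)))) = (x * (2 * int n - 1) + 2 * int n + 2) mod (4 * int n)"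
  using tau2_int[of n x] by (simp add: t2_def)

lemma t2A: "n \<ge> 1 \<Longrightarrow> t2 n (nat ((2*k+1) mod (4 * int n))) = nat ((-2*k+1) mod (4 * int n))"
proof -
  assume n: "n \<ge> 1"
  have "int (t2 n (nat ((2*k+1) mod (4 * int n)))) = ((2*k+1) * (2 * int n - 1) + 2 * int n + 2) mod (4 * int n)" by (rule t2_nat_int[OF n])
  also have "\<dots> = ((-2*k+1) + 4 * int n * (k+1)) mod (4 * int n)" by (simp add: algebra_simps)
  also have "\<dots> = (-2*k+1) mod (4 * int n)" by simp
  finally show ?thesis by simp
qed

lemma t2B: "n \<ge> 1 \<Longrightarrow> t2 n (nat ((2*k+1+1) mod (4 * int n))) = nat ((2 * int n - (2*k+1) + 1) mod (4 * int n))"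
proof -
  assume n: "n \<ge> 1"
  have "int (t2 n (nat ((2*k+1+1) mod (4 * int n)))) = ((2*k+1+1) * (2 * int n - 1) + 2 * int n + 2) mod (4 * int n)" by (rule t2_nat_int[OF n])
  also have "\<dots> = ((2 * int n - (2*k+1) + 1) + 4 * int n * (k+1)) mod (4 * int n)" by (simp add: algebra_simps)
  also have "\<dots> = (2 * int n - (2*k+1) + 1) mod (4 * int n)" by simp
  finally show ?thesis by simp
qed

lemma Q1_alt: "n \<ge> 1 \<Longrightarrow> Q1 n i \<longleftrightarrow>
   (\<exists>k. 1 \<le> k \<and> k \<le> int n - 1 \<and> i = nat ((2*k) mod (4 * int n))) \<or>
   (\<exists>k. - (int n div 2) \<le> k \<and> k \<le> int n div 2 - 1 \<and> i = nat ((2*k+1) mod (4 * int n)))"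
proof -
  assume n: "n \<ge> 1"
  have e1: "1 \<le> k \<Longrightarrow> k \<le> int n - 1 \<Longrightarrow> (int i = 2*k \<longleftrightarrow> i = nat ((2*k) mod (4 * int n)))" for k
    by (subst zmod_small) auto
  have e2: "- (int n div 2) \<le> k \<Longrightarrow> k \<le> int n div 2 - 1 \<Longrightarrow>
      (int i = (if k \<ge> 0 then 2*k+1 else 4*int n + 2*k + 1) \<longleftrightarrow> i = nat ((2*k+1) mod (4 * int n)))" for k
  proof -
    assume k: "- (int n div 2) \<le> k" "k \<le> int n div 2 - 1"
    show ?thesis
    proof (cases "k \<ge> 0")
      case True thus ?thesis using k mfacts[of n] by (subst zmod_small) auto
    next
      case False thus ?thesis using k mfacts[of n] by (subst zmod_neg) auto
    qed
  qed
  show ?thesis unfolding Q1_def using e1 e2 by blast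
qed

lemma Q2_alt: "n \<ge> 1 \<Longrightarrow> Q2 n i \<longleftrightarrow>
   (\<exists>k. 1 \<le> k \<and> k \<le> int n - 1 \<and> i = nat ((2*k+1) mod (4 * int n))) \<or>
   (\<exists>k. - (int n div 2) \<le> k \<and> k \<le> int n div 2 - 1 \<and> i = nat ((2*k+1+1) mod (4 * int n)))"
proof -
  assume n: "n \<ge> 1"
  have e1: "1 \<le> k \<Longrightarrow> k \<le> int n - 1 \<Longrightarrow> (int i = 2*k+1 \<longleftrightarrow> i = nat ((2*k+1) mod (4 * int n)))" for k
    by (subst zmod_small) auto
  have e2: "- (int n div 2) \<le> k \<Longrightarrow> k \<le> int n div 2 - 1 \<Longrightarrow>
      (int i = (if k \<ge> -1 then 2*k+2 else 4*int n + 2*k + 2) \<longleftrightarrow> i = nat ((2*k+1+1) mod (4 * int n)))" for k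
  proof -
    assume k: "- (int n div 2) \<le> k" "k \<le> int n div 2 - 1"
    show ?thesis
    proof (cases "k \<ge> -1")
      case True thus ?thesis using k mfacts[of n] by (subst zmod_small) auto
    next
      case False thus ?thesis using k mfacts[of n] by (subst zmod_neg) auto
    qed
  qed
  show ?thesis unfolding Q2_def using e1 e2 by blast
qed




lemma img_eq:
  assumes "\<And>k. c k \<Longrightarrow> F k = D (g k)"
  shows "{F k | k. c k} = D ` {g k | k. c k}"
proof
  show "{F k | k. c k} \<subseteq> D ` {g k | k. c k}" using assms by blast
  show "D ` {g k | k. c k} \<subseteq> {F k | k. c k}"
  proof
    fix x assume "x \<in> D ` {g k | k. c k}"
    then obtain k where k: "c k" "x = D (g k)" by blast
    hence "x = F k" using assms[OF k(1)] by simp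
    thus "x \<in> {F k | k. c k}" using k(1) by blast
  qed
qed

lemma part1:
  fixes n :: nat
  assumes n: "n \<ge> 1" and two: "(2::'a::field) \<noteq> 0"
  shows "is_basis_of
      ({sd_apow n (2*k) - sd_apow n (-2*k) | k. 1 \<le> k \<and> k \<le> int n - 1}
       \<union> {sd_conv n (sd_apow n (2*k) - sd_apow n (-2*k)) (sd_b n) | k. 1 \<le> k \<and> k \<le> int n - 1}
       \<union> {sd_apow n (2*k+1) - sd_apow n (2 * int n - (2*k+1)) | k.
            - (int n div 2) \<le> k \<and> k \<le> int n div 2 - 1}
       \<union> {sd_conv n (sd_apow n (2*k+1) - sd_apow n (2 * int n - (2*k+1))) (sd_b n) | k.
            - (int n div 2) \<le> k \<and> k \<le> int n div 2 - 1})
      (anti_cent n (sd_b n) :: (nat \<times> nat \<Rightarrow> 'a) set)"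
proof -
  define D :: "nat \<times> nat \<Rightarrow> nat \<times> nat \<Rightarrow> 'a" where "D = (\<lambda>p. dl p - dl (tau1 n p))"
  define X1 where "X1 = {(nat ((2*k) mod (4 * int n)), 0::nat) | k. 1 \<le> k \<and> k \<le> int n - 1}"
  define X2 where "X2 = {(nat ((2*k) mod (4 * int n)), 1::nat) | k. 1 \<le> k \<and> k \<le> int n - 1}"
  define X3 where "X3 = {(nat ((2*k+1) mod (4 * int n)), 0::nat) | k. - (int n div 2) \<le> k \<and> k \<le> int n div 2 - 1}"
  define X4 where "X4 = {(nat ((2*k+1) mod (4 * int n)), 1::nat) | k. - (int n div 2) \<le> k \<and> k \<le> int n div 2 - 1}"
  define P where "P = X1 \<union> X2 \<union> X3 \<union> X4"
  have memP: "p \<in> P \<longleftrightarrow> snd p < 2 \<and> Q1 n (fst p)" for p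
  proof -
    obtain i j where p: "p = (i, j)" by (cases p)
    have "j < 2 \<longleftrightarrow> j = 0 \<or> j = 1" by auto
    thus ?thesis unfolding p P_def X1_def X2_def X3_def X4_def Q1_alt[OF n] by auto
  qed
  have e1: "{sd_apow n (2*k) - sd_apow n (-2*k) | k. 1 \<le> k \<and> k \<le> int n - 1} = D ` X1"
    unfolding X1_def by (rule img_eq) (simp only: D_def sd_elem_dl' tau1_def fst_conv snd_conv tauA[OF n])
  have e2: "{sd_conv n (sd_apow n (2*k) - sd_apow n (-2*k)) (sd_b n) | k. 1 \<le> k \<and> k \<le> int n - 1} = D ` X2"
    unfolding X2_def by (rule img_eq) (simp only: D_def elem_b[OF n] tau1_def fst_conv snd_conv tauA[OF n])
  have e3: "{sd_apow n (2*k+1) - sd_apow n (2 * int n - (2*k+1)) | k. - (int n div 2) \<le> k \<and> k \<le> int n div 2 - 1} = D ` X3"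
    unfolding X3_def by (rule img_eq) (simp only: D_def sd_elem_dl' tau1_def fst_conv snd_conv tauB[OF n])
  have e4: "{sd_conv n (sd_apow n (2*k+1) - sd_apow n (2 * int n - (2*k+1))) (sd_b n) | k. - (int n div 2) \<le> k \<and> k \<le> int n div 2 - 1} = D ` X4"
    unfolding X4_def by (rule img_eq) (simp only: D_def elem_b[OF n] tau1_def fst_conv snd_conv tauB[OF n])
  have b: "is_basis_of ((\<lambda>p. dl p - dl (tau1 n p)) ` P)
     {f::_ \<Rightarrow> 'a. (\<forall>x. x \<notin> sd_grp n \<longrightarrow> f x = 0) \<and> (\<forall>x\<in>sd_grp n. f (tau1 n x) = - f x)}"
  proof (rule basis_gen[OF fin_grp _ _ _ _ _ two])
    show "\<forall>x\<in>sd_grp n. tau1 n x \<in> sd_grp n" by (auto simp: tau1_def grp_iff sig_lt)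
    show "\<forall>x\<in>sd_grp n. tau1 n (tau1 n x) = x" by (auto simp: tau1_def grp_iff sig_invol)
    show "P \<subseteq> sd_grp n" using memP Q1_lt[OF n] by (auto simp: grp_iff)
    show "\<forall>p\<in>P. tau1 n p \<notin> P" using memP Q1_lt[OF n] disj0[OF n] by (auto simp: tau1_def)
    show "\<forall>x\<in>sd_grp n. tau1 n x \<noteq> x \<longrightarrow> x \<in> P \<or> tau1 n x \<in> P"
    proof (intro ballI impI)
      fix x assume x: "x \<in> sd_grp n" and ne: "tau1 n x \<noteq> x"
      obtain i j where xx: "x = (i, j)" by (cases x)
      have "i < 4*n" "j < 2" using x xx by (auto simp: grp_iff)
      moreover have "sigL n i \<noteq> i" using ne xx by (simp add: tau1_def)
      ultimately show "x \<in> P \<or> tau1 n x \<in> P" using cov0 memP xx by (simp add: tau1_def)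
    qed
  qed
  show ?thesis unfolding e1 e2 e3 e4 anti_b[OF n] using b
    by (simp add: P_def image_Un D_def)
qed

lemma tau2_0: "tau2 n (i, 0) = (sigL n i, 0)" by (simp add: tau2_def)
lemma tau2_1: "tau2 n (i, 1) = (t2 n i, 1)" by (simp add: tau2_def t2_def)
lemma tau2_1s: "tau2 n (i, Suc 0) = (t2 n i, Suc 0)" by (simp add: tau2_def t2_def)

lemma part2:
  fixes n :: nat
  assumes n: "n \<ge> 1" and two: "(2::'a::field) \<noteq> 0"
  shows "is_basis_of
      ({sd_apow n (2*k) - sd_apow n (-2*k) | k. 1 \<le> k \<and> k \<le> int n - 1}
       \<union> {sd_conv n (sd_conv n (sd_a n) (sd_apow n (2*k) - sd_apow n (-2*k))) (sd_b n) | k.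
            1 \<le> k \<and> k \<le> int n - 1}
       \<union> {sd_apow n (2*k+1) - sd_apow n (2 * int n - (2*k+1)) | k.
            - (int n div 2) \<le> k \<and> k \<le> int n div 2 - 1}
       \<union> {sd_conv n (sd_conv n (sd_a n) (sd_apow n (2*k+1) - sd_apow n (2 * int n - (2*k+1)))) (sd_b n) | k.
            - (int n div 2) \<le> k \<and> k \<le> int n div 2 - 1})
      (anti_cent n (sd_conv n (sd_a n) (sd_b n)) :: (nat \<times> nat \<Rightarrow> 'a) set)"
proof -
  define D :: "nat \<times> nat \<Rightarrow> nat \<times> nat \<Rightarrow> 'a" where "D = (\<lambda>p. dl p - dl (tau2 n p))"
  define X1 where "X1 = {(nat ((2*k) mod (4 * int n)), 0::nat) | k. 1 \<le> k \<and> k \<le> int n - 1}"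
  define X2 where "X2 = {(nat ((2*k+1) mod (4 * int n)), 1::nat) | k. 1 \<le> k \<and> k \<le> int n - 1}"
  define X3 where "X3 = {(nat ((2*k+1) mod (4 * int n)), 0::nat) | k. - (int n div 2) \<le> k \<and> k \<le> int n div 2 - 1}"
  define X4 where "X4 = {(nat ((2*k+1+1) mod (4 * int n)), 1::nat) | k. - (int n div 2) \<le> k \<and> k \<le> int n div 2 - 1}"
  define P where "P = X1 \<union> X2 \<union> X3 \<union> X4"
  have memP: "(i, j) \<in> P \<longleftrightarrow> (j = 0 \<and> Q1 n i) \<or> (j = 1 \<and> Q2 n i)" for i j
    unfolding P_def X1_def X2_def X3_def X4_def Q1_alt[OF n] Q2_alt[OF n] by auto
  have e1: "{sd_apow n (2*k) - sd_apow n (-2*k) | k. 1 \<le> k \<and> k \<le> int n - 1} = D ` X1"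
    unfolding X1_def by (rule img_eq) (simp only: D_def sd_elem_dl' tau2_0 tauA[OF n])
  have e2: "{sd_conv n (sd_conv n (sd_a n) (sd_apow n (2*k) - sd_apow n (-2*k))) (sd_b n) | k. 1 \<le> k \<and> k \<le> int n - 1} = D ` X2"
    unfolding X2_def by (rule img_eq) (simp only: D_def elem_ab[OF n] tau2_1 t2A[OF n])
  have e3: "{sd_apow n (2*k+1) - sd_apow n (2 * int n - (2*k+1)) | k. - (int n div 2) \<le> k \<and> k \<le> int n div 2 - 1} = D ` X3"
    unfolding X3_def by (rule img_eq) (simp only: D_def sd_elem_dl' tau2_0 tauB[OF n])
  have e4: "{sd_conv n (sd_conv n (sd_a n) (sd_apow n (2*k+1) - sd_apow n (2 * int n - (2*k+1)))) (sd_b n) | k. - (int n div 2) \<le> k \<and> k \<le> int n div 2 - 1} = D ` X4"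
    unfolding X4_def by (rule img_eq) (simp only: D_def elem_ab[OF n] tau2_1 t2B[OF n])
  have b: "is_basis_of ((\<lambda>p. dl p - dl (tau2 n p)) ` P)
     {f::_ \<Rightarrow> 'a. (\<forall>x. x \<notin> sd_grp n \<longrightarrow> f x = 0) \<and> (\<forall>x\<in>sd_grp n. f (tau2 n x) = - f x)}"
  proof (rule basis_gen[OF fin_grp _ _ _ _ _ two])
    have cj: "j < 2 \<Longrightarrow> j = 0 \<or> j = 1" for j :: nat by auto
    show "\<forall>x\<in>sd_grp n. tau2 n x \<in> sd_grp n"
    proof
      fix x assume x: "x \<in> sd_grp n"
      obtain i j where xx: "x = (i, j)" by (cases x)
      show "tau2 n x \<in> sd_grp n" using x xx cj[of j] sig_lt[of i n] t2_lt[OF n, of i]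
        by (auto simp: grp_iff tau2_0 tau2_1 tau2_1s)
    qed
    show "\<forall>x\<in>sd_grp n. tau2 n (tau2 n x) = x"
    proof
      fix x assume x: "x \<in> sd_grp n"
      obtain i j where xx: "x = (i, j)" by (cases x)
      show "tau2 n (tau2 n x) = x" using x xx cj[of j] sig_invol[of i n] t2_invol[OF n, of i]
        by (auto simp: grp_iff tau2_0 tau2_1 tau2_1s)
    qed
    show "P \<subseteq> sd_grp n"
    proof
      fix x assume x: "x \<in> P"
      obtain i j where xx: "x = (i, j)" by (cases x)
      show "x \<in> sd_grp n" using x xx memP Q1_lt[OF n] Q2_lt[OF n] by (auto simp: grp_iff)
    qed
    show "\<forall>p\<in>P. tau2 n p \<notin> P"
    proof
      fix x assume x: "x \<in> P"
      obtain i j where xx: "x = (i, j)" by (cases x)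
      show "tau2 n x \<notin> P" using x xx memP disj0[OF n] disj1[OF n] by (auto simp: tau2_0 tau2_1 tau2_1s)
    qed
    show "\<forall>x\<in>sd_grp n. tau2 n x \<noteq> x \<longrightarrow> x \<in> P \<or> tau2 n x \<in> P"
    proof (intro ballI impI)
      fix x assume x: "x \<in> sd_grp n" and ne: "tau2 n x \<noteq> x"
      obtain i j where xx: "x = (i, j)" by (cases x)
      have i: "i < 4*n" "j < 2" using x xx by (auto simp: grp_iff)
      show "x \<in> P \<or> tau2 n x \<in> P"
      proof (cases "j = 0")
        case True thus ?thesis using ne xx cov0[OF i(1)] memP by (auto simp: tau2_0)
      next
        case False hence "j = 1" using i by simp
        thus ?thesis using ne xx cov1[OF n i(1)] memP by (auto simp: tau2_1 tau2_1s)
      qed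
    qed
  qed
  show ?thesis unfolding e1 e2 e3 e4 anti_ab[OF n] using b
    by (simp add: P_def image_Un D_def)
qed


theorem lemma5p2:
  fixes n :: nat
  assumes "n \<ge> 1"
    and "CHAR('a::field) = 0 \<or> (prime (CHAR('a)) \<and> odd (CHAR('a)))"
  shows "is_basis_of
      ({sd_apow n (2*k) - sd_apow n (-2*k) | k. 1 \<le> k \<and> k \<le> int n - 1}
       \<union> {sd_conv n (sd_apow n (2*k) - sd_apow n (-2*k)) (sd_b n) | k. 1 \<le> k \<and> k \<le> int n - 1}
       \<union> {sd_apow n (2*k+1) - sd_apow n (2 * int n - (2*k+1)) | k.
            - (int n div 2) \<le> k \<and> k \<le> int n div 2 - 1}
       \<union> {sd_conv n (sd_apow n (2*k+1) - sd_apow n (2 * int n - (2*k+1))) (sd_b n) | k.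
            - (int n div 2) \<le> k \<and> k \<le> int n div 2 - 1})
      (anti_cent n (sd_b n) :: (nat \<times> nat \<Rightarrow> 'a) set)
   \<and> is_basis_of
      ({sd_apow n (2*k) - sd_apow n (-2*k) | k. 1 \<le> k \<and> k \<le> int n - 1}
       \<union> {sd_conv n (sd_conv n (sd_a n) (sd_apow n (2*k) - sd_apow n (-2*k))) (sd_b n) | k.
            1 \<le> k \<and> k \<le> int n - 1}
       \<union> {sd_apow n (2*k+1) - sd_apow n (2 * int n - (2*k+1)) | k.
            - (int n div 2) \<le> k \<and> k \<le> int n div 2 - 1}
       \<union> {sd_conv n (sd_conv n (sd_a n) (sd_apow n (2*k+1) - sd_apow n (2 * int n - (2*k+1)))) (sd_b n) | k.
            - (int n div 2) \<le> k \<and> k \<le> int n div 2 - 1})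
      (anti_cent n (sd_conv n (sd_a n) (sd_b n)) :: (nat \<times> nat \<Rightarrow> 'a) set)"
proof -
  have n: "n \<ge> 1" using assms(1) .
  have two: "(2::'a) \<noteq> 0" using two_ne_zero_char[OF assms(2)] .
  show ?thesis using part1[OF n two] part2[OF n two] by blast
qed

end
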